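(* Let $G$ be a simple connected graph with $n$ vertices and $m$ edges, let $k\ge 1$ be an integer, and let $S_k(G)$ be the $k$-parallel subdivision graph of $G$. Put $f_1(x)=\frac{2+\sqrt{4-2x}}{2}$ and $f_2(x)=\frac{2-\sqrt{4-2x}}{2}$. Then the eigenvalues of the normalized Laplacian $\mathscr{L}(S_k(G))$ are as follows. (i) If $\lambda\notin\{0,2\}$ is an eigenvalue of $\mathscr{L}(G)$, then $f_1(\lambda)$ and $f_2(\lambda)$ are eigenvalues of $\mathscr{L}(S_k(G))$, and each of them has the same multiplicity as $\lambda$ has in $\mathscr{L}(G)$. (ii) $0$ and $2$ are eigenvalues of $\mathscr{L}(S_k(G))$, each of multiplicity $1$. (iii) $1$ is an eigenvalue of $\mathscr{L}(S_k(G))$; its multiplicity is $km-n+2$ if $G$ is bipartite and $km-n$ otherwise.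
   Context: For a graph $H$ with adjacency matrix $A(H)$ and diagonal degree matrix $D(H)$ (no isolated vertices), the normalized Laplacian is $\mathscr{L}(H)=I-D(H)^{-1/2}A(H)D(H)^{-1/2}$, i.e. its $(i,i)$ entry is $1$, its $(i,j)$ entry is $-1/\sqrt{d(i)d(j)}$ if $i\sim j$, and $0$ otherwise. The $k$-parallel subdivision graph $S_k(G)$ is obtained from $G$ by replacing each edge $uv$ of $G$ by $k$ internally disjoint paths $u-w-v$ of length $2$ (each with its own new middle vertex $w$); thus $S_k(G)$ has $n+km$ vertices and $2km$ edges, each vertex $u\in V(G)$ has degree $k\,d_G(u)$ and each new vertex has degree $2$. *)

theory Defs
  imports "Jordan_Normal_Form.Char_Poly"
begin

definition simple_graph :: "'v set \<Rightarrow> ('v \<Rightarrow> 'v \<Rightarrow> bool) \<Rightarrow> bool" where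
  "simple_graph V E \<longleftrightarrow> finite V \<and>
     (\<forall>u v. E u v \<longrightarrow> u \<in> V \<and> v \<in> V \<and> u \<noteq> v \<and> E v u)"

definition connected_graph :: "'v set \<Rightarrow> ('v \<Rightarrow> 'v \<Rightarrow> bool) \<Rightarrow> bool" where
  "connected_graph V E \<longleftrightarrow> (\<forall>u\<in>V. \<forall>v\<in>V. E\<^sup>*\<^sup>* u v)"

definition bipartite_graph :: "'v set \<Rightarrow> ('v \<Rightarrow> 'v \<Rightarrow> bool) \<Rightarrow> bool" where
  "bipartite_graph V E \<longleftrightarrow> (\<exists>A \<subseteq> V. \<forall>u v. E u v \<longrightarrow> (u \<in> A \<longleftrightarrow> v \<notin> A))"

definition graph_edges :: "'v set \<Rightarrow> ('v \<Rightarrow> 'v \<Rightarrow> bool) \<Rightarrow> 'v set set" where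
  "graph_edges V E = {{u, v} | u v. u \<in> V \<and> v \<in> V \<and> E u v}"

definition degree :: "'v set \<Rightarrow> ('v \<Rightarrow> 'v \<Rightarrow> bool) \<Rightarrow> 'v \<Rightarrow> nat" where
  "degree V E u = card {v \<in> V. E u v}"

text \<open>An arbitrary fixed enumeration of the vertex set (spectra do not depend on it).\<close>
definition vertex_list :: "'v set \<Rightarrow> 'v list" where
  "vertex_list V = (SOME vs. distinct vs \<and> set vs = V)"

definition nlap_entry :: "'v set \<Rightarrow> ('v \<Rightarrow> 'v \<Rightarrow> bool) \<Rightarrow> 'v \<Rightarrow> 'v \<Rightarrow> real" where
  "nlap_entry V E x y =
     (if x = y then 1
      else if E x y then - 1 / sqrt (real (degree V E x) * real (degree V E y))
      else 0)"

definition norm_laplacian :: "'v set \<Rightarrow> ('v \<Rightarrow> 'v \<Rightarrow> bool) \<Rightarrow> real mat" where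
  "norm_laplacian V E =
     (let vs = vertex_list V
      in mat (length vs) (length vs) (\<lambda>(i, j). nlap_entry V E (vs ! i) (vs ! j)))"

definition eig_mult :: "real mat \<Rightarrow> real \<Rightarrow> nat" where
  "eig_mult M c = order c (char_poly M)"

text \<open>k-parallel subdivision: original vertices Inl u; new vertex Inr (e, i) is the
  middle vertex of the i-th path (1 \<le> i \<le> k) replacing edge e.\<close>
definition subdiv_vertices :: "nat \<Rightarrow> 'v set \<Rightarrow> ('v \<Rightarrow> 'v \<Rightarrow> bool) \<Rightarrow> ('v + 'v set \<times> nat) set" where
  "subdiv_vertices k V E = Inl ` V \<union> Inr ` (graph_edges V E \<times> {1..k})"

fun subdiv_adj :: "nat \<Rightarrow> 'v set \<Rightarrow> ('v \<Rightarrow> 'v \<Rightarrow> bool) \<Rightarrow>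
    ('v + 'v set \<times> nat) \<Rightarrow> ('v + 'v set \<times> nat) \<Rightarrow> bool" where
  "subdiv_adj k V E (Inl u) (Inr (e, i)) \<longleftrightarrow>
     u \<in> V \<and> e \<in> graph_edges V E \<and> u \<in> e \<and> i \<in> {1..k}"
| "subdiv_adj k V E (Inr (e, i)) (Inl u) \<longleftrightarrow>
     u \<in> V \<and> e \<in> graph_edges V E \<and> u \<in> e \<and> i \<in> {1..k}"
| "subdiv_adj k V E _ _ \<longleftrightarrow> False"

definition f1 :: "real \<Rightarrow> real" where "f1 x = (2 + sqrt (4 - 2 * x)) / 2"
definition f2 :: "real \<Rightarrow> real" where "f2 x = (2 - sqrt (4 - 2 * x)) / 2"

end

theory Submission
  imports Defs "Jordan_Normal_Form.Schur_Decomposition"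
begin

lemma order_one_sym:
  fixes A :: "real mat"
  assumes A: "A \<in> carrier_mat n n" and sym: "transpose_mat A = A"
  and w: "w \<in> carrier_vec n" and w0: "w \<noteq> 0\<^sub>v n" and ew: "A *\<^sub>v w = a \<cdot>\<^sub>v w"
  and uniq: "\<And>v. v \<in> carrier_vec n \<Longrightarrow> A *\<^sub>v v = a \<cdot>\<^sub>v v \<Longrightarrow> \<exists>c. v = c \<cdot>\<^sub>v w"
  shows "Polynomial.order a (char_poly A) = 1"
proof -
  have n: "n \<noteq> 0"
  proof
    assume "n = 0"
    with w w0 show False by (auto intro!: eq_vecI)
  qed
  define b where "b = basis_completion w"
  define ws where "ws = gram_schmidt n b"
  define W where "W = mat_of_cols n ws"
  define W' where "W' = corthogonal_inv W"
  define A' where "A' = W' * A * W"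
  interpret cof_vec_space n "TYPE(real)" .
  from basis_completion[OF w w0, folded b_def]
  have span_b: "span (set b) = carrier_vec n" and dist_b: "distinct b" 
    and indep: "\<not> lin_dep (set b)" and b: "set b \<subseteq> carrier_vec n" and hdb: "hd b = w" 
    and len_b: "length b = n" by auto
  from hdb len_b n obtain vs where bv: "b = w # vs" by (cases b, auto)
  from gram_schmidt_result[OF b dist_b indep refl, folded ws_def]
  have ws: "set ws \<subseteq> carrier_vec n" "corthogonal ws" "length ws = n" 
    by (auto simp: len_b)
  from gram_schmidt_hd[OF w, of vs, folded bv] have hdws: "hd ws = w" unfolding ws_def .
  have ws0: "ws ! 0 = w" using hdws ws(3) n by (cases ws, auto)
  have orth_W: "corthogonal_mat W" using orthogonal_mat_of_cols ws unfolding W_def.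
  have W: "W \<in> carrier_mat n n"
    using ws unfolding W_def using mat_of_cols_carrier(1)[of n ws] by auto
  have W': "W' \<in> carrier_mat n n" unfolding W'_def corthogonal_inv_def using W 
    by (auto simp: mat_of_rows_def)  
  from corthogonal_inv_result[OF orth_W] 
  have W'W: "inverts_mat W' W" unfolding W'_def .
  hence WW': "inverts_mat W W'" using mat_mult_left_right_inverse[OF W' W] W' W
    unfolding inverts_mat_def by auto
  have W'W1: "W' * W = 1\<^sub>m n" using W'W W' unfolding inverts_mat_def by auto
  have WW'1: "W * W' = 1\<^sub>m n" using WW' W unfolding inverts_mat_def by auto
  have A': "A' \<in> carrier_mat n n" using W W' A unfolding A'_def by auto
  have A'A_wit: "similar_mat_wit A' A W' W"
    by (rule similar_mat_witI[of _ _ n], insert W W' A A' W'W WW', auto simp: A'_def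
    inverts_mat_def)
  hence A'A: "similar_mat A' A" unfolding similar_mat_def by blast
  let ?f = "(\<lambda> i. if i = 0 then a else 0)"
  have col0: "col A' 0 = vec n ?f"
    unfolding A'_def W'_def W_def
    using corthogonal_col_ev_0[OF A w w0 ew n hdws ws].
  have row0: "A' $$ (0, j) = 0" if j: "0 < j" "j < n" for j
  proof -
    have wsj: "ws ! j \<in> carrier_vec n" using ws j by auto
    have "A' $$ (0, j) = (W' * (A * W)) $$ (0, j)" unfolding A'_def using W' A W by auto
    also have "\<dots> = row W' 0 \<bullet> col (A * W) j"
      by (subst index_mult_mat, insert W W' A j n, auto)
    also have "row W' 0 = vec_inv (ws ! 0)"
    proof -
      have "ws ! 0 \<in> carrier_vec n" using ws n by auto
      thus ?thesis unfolding W'_def W_def corthogonal_inv_def using n ws by auto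
    qed
    also have "col (A * W) j = A *\<^sub>v ws ! j" 
      using A W j ws wsj unfolding W_def by (auto simp: col_mat_of_cols)
    also have "vec_inv (ws ! 0) = (1 / (w \<bullet> w)) \<cdot>\<^sub>v w" unfolding ws0 vec_inv_def by simp
    also have "((1 / (w \<bullet> w)) \<cdot>\<^sub>v w) \<bullet> (A *\<^sub>v ws ! j) = (1 / (w \<bullet> w)) * (w \<bullet> (A *\<^sub>v ws ! j))"
      using w wsj A by auto
    also have "w \<bullet> (A *\<^sub>v ws ! j) = (transpose_mat A *\<^sub>v w) \<bullet> ws ! j"
      using transpose_vec_mult_scalar[OF A wsj w] by simp
    also have "\<dots> = a * (w \<bullet> ws ! j)" unfolding sym ew using w wsj by auto
    also have "w \<bullet> ws ! j = 0"
    proof -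
      have "ws ! 0 \<bullet>c ws ! j = 0" using ws(2) j ws(3) unfolding corthogonal_def by auto
      thus ?thesis unfolding ws0 by simp
    qed
    finally show ?thesis by simp
  qed
  obtain A1 A2 A0 A3 where splitA': "split_block A' 1 1 = (A1,A2,A0,A3)"
    by (cases "split_block A' 1 1", auto)
  from A' n have "dim_row A' = 1 + (n-1)" "dim_col A' = 1 + (n-1)" by auto
  from split_block[OF splitA' this] have A2: "A2 \<in> carrier_mat 1 (n-1)"
    and A3: "A3 \<in> carrier_mat (n-1) (n-1)" 
    and A'block: "A' = four_block_mat A1 A2 A0 A3" by auto
  have A1id: "A1 = mat 1 1 (\<lambda> _. a)"
    using splitA'[unfolded split_block_def Let_def] arg_cong[OF col0, of "\<lambda> v. v $ 0"] A' n
    by (auto simp: col_def)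
  have A1: "A1 \<in> carrier_mat 1 1" unfolding A1id by auto
  {
    fix i
    assume "i < n - 1"
    with arg_cong[OF col0, of "\<lambda> v. v $ Suc i"] A'
    have "A' $$ (Suc i, 0) = 0" by auto
  } note A'0 = this
  have A0id: "A0 = 0\<^sub>m (n-1) 1"
    using splitA'[unfolded split_block_def Let_def] A'0 A' by auto
  have A2id: "A2 = 0\<^sub>m 1 (n-1)"
    using splitA'[unfolded split_block_def Let_def] row0 A' by auto
  have cp: "char_poly A = [: -a, 1:] * char_poly A3"
  proof -
    have "char_poly A = char_poly A'" using char_poly_similar[OF A'A] by simp
    also have "\<dots> = char_poly A1 * char_poly A3"
      unfolding A'block A0id by (rule char_poly_four_block_zeros_col[OF A1 A2 A3])
    also have "char_poly A1 = [: -a,1 :]"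
      by (simp add: A1id char_poly_defs det_def sign_def)
    finally show ?thesis .
  qed
  have noev: "\<not> eigenvalue A3 a"
  proof
    assume "eigenvalue A3 a"
    then obtain u where u: "u \<in> carrier_vec (n-1)" "u \<noteq> 0\<^sub>v (n-1)" "A3 *\<^sub>v u = a \<cdot>\<^sub>v u"
      unfolding eigenvalue_def eigenvector_def using A3 by auto
    define ut where "ut = 0\<^sub>v 1 @\<^sub>v u"
    have "dim_vec u = n - 1" using u(1) by (rule carrier_vecD)
    hence "dim_vec ut = n" unfolding ut_def using n by simp
    hence ut: "ut \<in> carrier_vec n" by (rule carrier_vecI)
    have a1z: "A1 *\<^sub>v 0\<^sub>v 1 = 0\<^sub>v 1" unfolding A1id by (intro eq_vecI) (auto simp: scalar_prod_def)
    have "A' *\<^sub>v ut = A1 *\<^sub>v 0\<^sub>v 1 @\<^sub>v A3 *\<^sub>v u"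
      unfolding A'block ut_def A2id A0id by (rule mult_mat_vec_split[OF A1 A3], insert u, auto)
    also have "\<dots> = 0\<^sub>v 1 @\<^sub>v (a \<cdot>\<^sub>v u)" unfolding a1z u(3) ..
    also have "\<dots> = a \<cdot>\<^sub>v ut" unfolding ut_def by (rule eq_vecI, insert u, auto)
    finally have eu: "A' *\<^sub>v ut = a \<cdot>\<^sub>v ut" .
    define z where "z = W *\<^sub>v ut"
    have z: "z \<in> carrier_vec n" unfolding z_def using W ut by auto
    have AW: "A * W = W * A'"
    proof -
      have "W * A' = W * (W' * (A * W))" unfolding A'_def
        by (subst assoc_mult_mat[of _ n n _ n _ n], insert W W' A, auto)
      also have "\<dots> = (W * W') * (A * W)"
        by (rule assoc_mult_mat[symmetric, of _ n n _ n _ n], insert W W' A, auto)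
      also have "\<dots> = A * W" unfolding WW'1 using A W by simp
      finally show ?thesis by simp
    qed
    have "A *\<^sub>v z = (A * W) *\<^sub>v ut" unfolding z_def using A W ut by auto
    also have "\<dots> = W *\<^sub>v (A' *\<^sub>v ut)" unfolding AW using W A' ut by auto
    also have "\<dots> = a \<cdot>\<^sub>v z" unfolding eu z_def using W ut by auto
    finally obtain c where zc: "z = c \<cdot>\<^sub>v w" using uniq[OF z] by auto
    have "W' *\<^sub>v z = (W' * W) *\<^sub>v ut" unfolding z_def using W W' ut by simp
    hence "ut = W' *\<^sub>v z" unfolding W'W1 using ut by simp
    also have "\<dots> = c \<cdot>\<^sub>v (W' *\<^sub>v w)" unfolding zc using W' w by auto
    also have "W' *\<^sub>v w = col (W' * W) 0"
    proof -
      have "col W 0 = w" unfolding W_def using ws ws0 n w by (subst col_mat_of_cols, auto)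
      hence "col (W' * W) 0 = W' *\<^sub>v w" using W W' n by (subst col_mult2[of _ n n _ n], auto)
      thus ?thesis by simp
    qed
    also have "\<dots> = unit_vec n 0" using W'W1 n by auto
    finally have eq: "ut = c \<cdot>\<^sub>v unit_vec n 0" .
    have ui: "u $ i = 0" if i: "i < n - 1" for i
    proof -
      have "ut $ Suc i = u $ i" unfolding ut_def using u(1) i by (simp add: carrier_vecD)
      moreover have "ut $ Suc i = 0" unfolding eq using i n by simp
      ultimately show ?thesis by simp
    qed
    hence "u = 0\<^sub>v (n-1)" using u(1) by (intro eq_vecI) auto
    with u show False by auto
  qed
  have cp3: "char_poly A3 \<noteq> 0"
    using degree_monic_char_poly[OF A3] by auto
  have "Polynomial.order a (char_poly A) = Polynomial.order a [: -a, 1:] + Polynomial.order a (char_poly A3)"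
    unfolding cp by (rule order_mult, insert cp3, metis mult_eq_0_iff pCons_eq_0_iff zero_neq_one)
  also have "Polynomial.order a (char_poly A3) = 0"
    using noev eigenvalue_root_char_poly[OF A3] order_root by blast
  also have "Polynomial.order a [: -a, 1:] = 1" using order_power_n_n[of a 1] by simp
  finally show ?thesis by simp
qed



definition lapm :: "nat \<Rightarrow> (nat \<Rightarrow> nat \<Rightarrow> bool) \<Rightarrow> (nat \<Rightarrow> nat) \<Rightarrow> real mat" where
  "lapm n R D = mat n n (\<lambda>(i,j). if i = j then 1 else if R i j then - 1 / sqrt (real (D i) * real (D j)) else 0)"

context
  fixes n :: nat and R :: "nat \<Rightarrow> nat \<Rightarrow> bool" and D :: "nat \<Rightarrow> nat"
  assumes Rsym: "\<And>i j. R i j \<Longrightarrow> R j i"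
    and Rirr: "\<And>i. \<not> R i i"
    and Rn: "\<And>i j. R i j \<Longrightarrow> i < n \<and> j < n"
    and Dcard: "\<And>i. i < n \<Longrightarrow> D i = card {j. j < n \<and> R i j}"
    and Dpos: "\<And>i. i < n \<Longrightarrow> D i > 0"
begin

lemma lapm_carrier: "lapm n R D \<in> carrier_mat n n" unfolding lapm_def by auto

lemma lapm_mult: assumes x: "x \<in> carrier_vec n" and i: "i < n"
  shows "(lapm n R D *\<^sub>v x) $ i = x $ i - (\<Sum>j\<in>{j. j < n \<and> R i j}. x $ j / sqrt (real (D i) * real (D j)))"
proof -
  have "(lapm n R D *\<^sub>v x) $ i = (\<Sum>j\<in>{0..<n}. (if i = j then 1 else if R i j then - 1 / sqrt (real (D i) * real (D j)) else 0) * x $ j)"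
    using x i by (simp add: lapm_def scalar_prod_def)
  also have "\<dots> = (\<Sum>j\<in>{0..<n}. (if i = j then x $ j else 0)) + (\<Sum>j\<in>{0..<n}. if R i j then - (x $ j / sqrt (real (D i) * real (D j))) else 0)"
    by (subst sum.distrib[symmetric], rule sum.cong, auto simp: Rirr)
  also have "(\<Sum>j\<in>{0..<n}. (if i = j then x $ j else 0)) = x $ i" using i by simp
  also have "(\<Sum>j\<in>{0..<n}. if R i j then - (x $ j / sqrt (real (D i) * real (D j))) else 0)
     = (\<Sum>j\<in>{j \<in> {0..<n}. R i j}. - (x $ j / sqrt (real (D i) * real (D j))))"
    by (rule sum.inter_filter[symmetric], simp)
  also have "{j \<in> {0..<n}. R i j} = {j. j < n \<and> R i j}" by auto
  finally show ?thesis by (simp add: sum_negf)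
qed

lemma eig_iff: assumes x: "x \<in> carrier_vec n"
  shows "(lapm n R D *\<^sub>v x = lam \<cdot>\<^sub>v x) \<longleftrightarrow>
    (\<forall>i<n. (1 - lam) * D i * (x $ i / sqrt (D i)) = (\<Sum>j\<in>{j. j < n \<and> R i j}. x $ j / sqrt (D j)))"
proof -
  have eqi: "((lapm n R D *\<^sub>v x) $ i = lam * x $ i) \<longleftrightarrow>
    (1 - lam) * D i * (x $ i / sqrt (D i)) = (\<Sum>j\<in>{j. j < n \<and> R i j}. x $ j / sqrt (D j))" if i: "i < n" for i
  proof -
    let ?N = "{j. j < n \<and> R i j}"
    have di: "sqrt (D i) > 0" using Dpos[OF i] by simp
    have "(\<Sum>j\<in>?N. x $ j / sqrt (real (D i) * real (D j))) = (\<Sum>j\<in>?N. x $ j / sqrt (D j)) / sqrt (D i)"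
      by (simp add: sum_divide_distrib real_sqrt_mult divide_divide_eq_left mult.commute)
    hence "(lapm n R D *\<^sub>v x) $ i = x $ i - (\<Sum>j\<in>?N. x $ j / sqrt (D j)) / sqrt (D i)"
      using lapm_mult[OF x i] by simp
    hence "((lapm n R D *\<^sub>v x) $ i = lam * x $ i) \<longleftrightarrow> x $ i - (\<Sum>j\<in>?N. x $ j / sqrt (D j)) / sqrt (D i) = lam * x $ i"
      by simp
    also have "\<dots> \<longleftrightarrow> sqrt (D i) * x $ i - (\<Sum>j\<in>?N. x $ j / sqrt (D j)) = lam * sqrt (D i) * x $ i"
      using di by (auto simp: field_simps)
    also have "\<dots> \<longleftrightarrow> (1 - lam) * D i * (x $ i / sqrt (D i)) = (\<Sum>j\<in>?N. x $ j / sqrt (D j))"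
    proof -
      have key: "D i * (x $ i / sqrt (D i)) = sqrt (D i) * x $ i"
        using di by (simp add: field_simps)
      have "(1 - lam) * D i * (x $ i / sqrt (D i)) = (1 - lam) * (D i * (x $ i / sqrt (D i)))"
        by (rule mult.assoc)
      also have "\<dots> = (1 - lam) * (sqrt (D i) * x $ i)" unfolding key ..
      finally have A: "(1 - lam) * D i * (x $ i / sqrt (D i)) = (1 - lam) * (sqrt (D i) * x $ i)" .
      have B: "(1 - lam) * (sqrt (D i) * x $ i) = sqrt (D i) * x $ i - lam * sqrt (D i) * x $ i"
        by (simp add: algebra_simps)
      have aux: "\<And>a b c :: real. (a - c = b) = (a - b = c)" by auto
      show ?thesis unfolding A B by (rule aux)
    qed
    finally show ?thesis .
  qed
  show ?thesis
  proof
    assume ev: "lapm n R D *\<^sub>v x = lam \<cdot>\<^sub>v x"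
    show "\<forall>i<n. (1 - lam) * D i * (x $ i / sqrt (D i)) = (\<Sum>j\<in>{j. j < n \<and> R i j}. x $ j / sqrt (D j))"
    proof (intro allI impI)
      fix i assume i: "i < n"
      have "(lapm n R D *\<^sub>v x) $ i = lam * x $ i" unfolding ev using i x by simp
      thus "(1 - lam) * D i * (x $ i / sqrt (D i)) = (\<Sum>j\<in>{j. j < n \<and> R i j}. x $ j / sqrt (D j))"
        using eqi[OF i] by simp
    qed
  next
    assume "\<forall>i<n. (1 - lam) * D i * (x $ i / sqrt (D i)) = (\<Sum>j\<in>{j. j < n \<and> R i j}. x $ j / sqrt (D j))"
    thus "lapm n R D *\<^sub>v x = lam \<cdot>\<^sub>v x"
      using eqi x lapm_carrier by (intro eq_vecI) auto
  qed
qed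

lemma swap_sum: "(\<Sum>i<n. \<Sum>j\<in>{j. j < n \<and> R i j}. f j) = (\<Sum>j<n. real (D j) * f j)"
proof -
  have "(\<Sum>i<n. \<Sum>j\<in>{j. j < n \<and> R i j}. f j) = (\<Sum>i<n. \<Sum>j<n. if R i j then f j else 0)"
    by (rule sum.cong[OF refl], subst sum.inter_filter[symmetric], auto intro: sum.cong)
  also have "\<dots> = (\<Sum>j<n. \<Sum>i<n. if R i j then f j else 0)" by (rule sum.swap)
  also have "\<dots> = (\<Sum>j<n. \<Sum>i\<in>{i. i < n \<and> R j i}. f j)"
  proof (rule sum.cong[OF refl])
    fix j
    have eqs: "{i. i < n \<and> R j i} = {i \<in> {..<n}. R i j}" using Rsym by blast
    show "(\<Sum>i<n. if R i j then f j else 0) = (\<Sum>i\<in>{i. i < n \<and> R j i}. f j)"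
      unfolding eqs by (rule sum.inter_filter[symmetric]) simp
  qed
  also have "\<dots> = (\<Sum>j<n. real (D j) * f j)"
    by (rule sum.cong[OF refl], simp add: Dcard)
  finally show ?thesis .
qed

lemma const_sum: "(\<Sum>i<n. \<Sum>j\<in>{j. j < n \<and> R i j}. f i) = (\<Sum>i<n. real (D i) * f i)"
  by (rule sum.cong[OF refl], simp add: Dcard)

lemma quad:
  fixes y :: "nat \<Rightarrow> real" and c :: real
  assumes h: "\<forall>i<n. c * D i * y i = (\<Sum>j\<in>{j. j < n \<and> R i j}. y j)"
  shows "(\<Sum>i<n. \<Sum>j\<in>{j. j < n \<and> R i j}. (y i - y j)^2) = 2 * (1 - c) * (\<Sum>i<n. D i * (y i)^2)"
    and "(\<Sum>i<n. \<Sum>j\<in>{j. j < n \<and> R i j}. (y i + y j)^2) = 2 * (1 + c) * (\<Sum>i<n. D i * (y i)^2)"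
proof -
  let ?N = "\<lambda>i. {j. j < n \<and> R i j}"
  have m: "(\<Sum>i<n. \<Sum>j\<in>?N i. y i * y j) = c * (\<Sum>i<n. D i * (y i)^2)"
  proof -
    have "(\<Sum>i<n. \<Sum>j\<in>?N i. y i * y j) = (\<Sum>i<n. y i * (\<Sum>j\<in>?N i. y j))"
      by (simp add: sum_distrib_left)
    also have "\<dots> = (\<Sum>i<n. y i * (c * D i * y i))" using h by auto
    also have "\<dots> = c * (\<Sum>i<n. D i * (y i)^2)"
      by (simp add: sum_distrib_left power2_eq_square algebra_simps)
    finally show ?thesis .
  qed
  have s1: "(\<Sum>i<n. \<Sum>j\<in>?N i. (y i)^2) = (\<Sum>i<n. D i * (y i)^2)" by (rule const_sum)
  have s2: "(\<Sum>i<n. \<Sum>j\<in>?N i. (y j)^2) = (\<Sum>i<n. D i * (y i)^2)" by (rule swap_sum)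
  have "(\<Sum>i<n. \<Sum>j\<in>?N i. (y i - y j)^2) = 
     (\<Sum>i<n. \<Sum>j\<in>?N i. (y i)^2) + (\<Sum>i<n. \<Sum>j\<in>?N i. (y j)^2) - 2 * (\<Sum>i<n. \<Sum>j\<in>?N i. y i * y j)"
    by (simp add: power2_diff sum.distrib sum_subtractf sum_distrib_left mult.assoc)
  thus "(\<Sum>i<n. \<Sum>j\<in>?N i. (y i - y j)^2) = 2 * (1 - c) * (\<Sum>i<n. D i * (y i)^2)"
    unfolding s1 s2 m by (simp add: algebra_simps)
  have "(\<Sum>i<n. \<Sum>j\<in>?N i. (y i + y j)^2) = 
     (\<Sum>i<n. \<Sum>j\<in>?N i. (y i)^2) + (\<Sum>i<n. \<Sum>j\<in>?N i. (y j)^2) + 2 * (\<Sum>i<n. \<Sum>j\<in>?N i. y i * y j)"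
    by (simp add: power2_sum sum.distrib sum_distrib_left mult.assoc)
  thus "(\<Sum>i<n. \<Sum>j\<in>?N i. (y i + y j)^2) = 2 * (1 + c) * (\<Sum>i<n. D i * (y i)^2)"
    unfolding s1 s2 m by (simp add: algebra_simps)
qed

lemma zero_terms:
  fixes g :: "nat \<Rightarrow> nat \<Rightarrow> real"
  assumes "(\<Sum>i<n. \<Sum>j\<in>{j. j < n \<and> R i j}. (g i j)^2) = 0" and "R i j"
  shows "g i j = 0"
proof -
  have fin: "finite {j. j < n \<and> R i j}" by simp
  have i: "i < n" and j: "j < n" using Rn[OF assms(2)] by auto
  have "\<forall>i\<in>{..<n}. (\<Sum>j\<in>{j. j < n \<and> R i j}. (g i j)^2) = 0"
    using assms(1) by (subst sum_nonneg_eq_0_iff[symmetric], auto intro: sum_nonneg)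
  hence "(\<Sum>j\<in>{j. j < n \<and> R i j}. (g i j)^2) = 0" using i by auto
  hence "(g i j)^2 = 0" using j assms(2) by (subst (asm) sum_nonneg_eq_0_iff, auto)
  thus ?thesis by simp
qed

lemma propagate:
  assumes "\<And>i j. R i j \<Longrightarrow> g i = g j" and "R\<^sup>*\<^sup>* i j"
  shows "g i = g j"
  using assms(2) by (induct rule: rtranclp_induct) (auto dest: assms(1))

lemma eig_le2: assumes x: "x \<in> carrier_vec n" "x \<noteq> 0\<^sub>v n" and e: "lapm n R D *\<^sub>v x = lam \<cdot>\<^sub>v x"
  shows "lam \<le> 2"
proof -
  define y where "y i = x $ i / sqrt (D i)" for i
  have h: "\<forall>i<n. (1 - lam) * D i * y i = (\<Sum>j\<in>{j. j < n \<and> R i j}. y j)"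
    using e unfolding eig_iff[OF x(1)] y_def .
  from x obtain i where i: "i < n" "x $ i \<noteq> 0" by (metis carrier_vecD eq_vecI index_zero_vec(1,2))
  have yi: "y i \<noteq> 0" using i Dpos[OF i(1)] unfolding y_def by auto
  have pos: "(\<Sum>i<n. D i * (y i)^2) > 0"
    by (rule sum_pos2[of _ i], insert i yi Dpos[OF i(1)], auto)
  have "0 \<le> (\<Sum>i<n. \<Sum>j\<in>{j. j < n \<and> R i j}. (y i + y j)^2)" by (intro sum_nonneg, auto)
  also have "\<dots> = 2 * (1 + (1 - lam)) * (\<Sum>i<n. D i * (y i)^2)" by (rule quad(2)[OF h])
  finally have "0 \<le> (4 - 2 * lam) * (\<Sum>i<n. D i * (y i)^2)" by simp
  with pos have "0 \<le> 4 - 2 * lam" by (simp add: zero_le_mult_iff)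
  thus ?thesis by simp
qed

lemma ev_edge: assumes x: "x \<in> carrier_vec n" and e: "lapm n R D *\<^sub>v x = lam \<cdot>\<^sub>v x"
  and lam: "lam = 0 \<or> lam = 2" and r: "R i j"
  shows "x $ i / sqrt (D i) = (1 - lam) * (x $ j / sqrt (D j))"
proof -
  define y where "y i = x $ i / sqrt (D i)" for i
  have h: "\<forall>i<n. (1 - lam) * D i * y i = (\<Sum>j\<in>{j. j < n \<and> R i j}. y j)"
    using e unfolding eig_iff[OF x(1)] y_def .
  show ?thesis using lam
  proof
    assume l: "lam = 0"
    have "(\<Sum>i<n. \<Sum>j\<in>{j. j < n \<and> R i j}. (y i - y j)^2) = 0"
      using quad(1)[OF h] l by simp
    from zero_terms[OF this r] show ?thesis unfolding y_def l by simp
  next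
    assume l: "lam = 2"
    have "(\<Sum>i<n. \<Sum>j\<in>{j. j < n \<and> R i j}. (y i + y j)^2) = 0"
      using quad(2)[OF h] l by simp
    from zero_terms[OF this r] show ?thesis unfolding y_def l by simp
  qed
qed

lemma lapm_sym: "transpose_mat (lapm n R D) = lapm n R D"
  unfolding lapm_def by (rule eq_matI, auto simp: Rsym mult.commute)

lemma lapm_dim: "dim_row (lapm n R D) = n" unfolding lapm_def by simp

lemma ev_unique0:
  assumes conn: "\<And>i j. i < n \<Longrightarrow> j < n \<Longrightarrow> R\<^sup>*\<^sup>* i j" and n: "0 < n"
    and x: "x \<in> carrier_vec n" and e: "lapm n R D *\<^sub>v x = 0 \<cdot>\<^sub>v x"
  shows "\<exists>c. x = c \<cdot>\<^sub>v vec n (\<lambda>i. sqrt (D i))"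
proof -
  define y where "y i = x $ i / sqrt (D i)" for i
  have edge: "y i = y j" if "R i j" for i j
    using ev_edge[OF x e _ that] unfolding y_def by simp
  have yc: "y i = y 0" if "i < n" for i
    using propagate[of y, OF edge conn[OF that n]] by auto
  show ?thesis
  proof (intro exI[of _ "y 0"] eq_vecI)
    fix i assume "i < dim_vec (y 0 \<cdot>\<^sub>v vec n (\<lambda>i. sqrt (D i)))"
    hence i: "i < n" by simp
    have "x $ i = sqrt (D i) * y i" unfolding y_def using Dpos[OF i] by simp
    thus "x $ i = (y 0 \<cdot>\<^sub>v vec n (\<lambda>i. sqrt (D i))) $ i" using yc[OF i] i by simp
  qed (use x in auto)
qed

lemma ev_w0: "lapm n R D *\<^sub>v vec n (\<lambda>i. sqrt (D i)) = 0 \<cdot>\<^sub>v vec n (\<lambda>i. sqrt (D i))"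
proof (subst eig_iff, simp, intro allI impI)
  fix i assume i: "i < n"
  have "\<And>j. j \<in> {j. j < n \<and> R i j} \<Longrightarrow> vec n (\<lambda>i. sqrt (D i)) $ j / sqrt (D j) = 1"
    using Dpos by auto
  hence "(\<Sum>j\<in>{j. j < n \<and> R i j}. vec n (\<lambda>i. sqrt (D i)) $ j / sqrt (D j)) = card {j. j < n \<and> R i j}"
    by simp
  also have "\<dots> = D i" using Dcard[OF i] by simp
  finally show "(1 - 0) * real (D i) * (vec n (\<lambda>i. sqrt (real (D i))) $ i / sqrt (real (D i))) =
         (\<Sum>j\<in>{j. j < n \<and> R i j}. vec n (\<lambda>i. sqrt (real (D i))) $ j / sqrt (real (D j)))"
    using i Dpos[OF i] by simp
qed

lemma w_nonzero: assumes n: "0 < n" and s: "\<And>i. i < n \<Longrightarrow> s i \<noteq> 0"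
  shows "vec n (\<lambda>i. s i * sqrt (D i)) \<noteq> 0\<^sub>v n"
proof
  assume "vec n (\<lambda>i. s i * sqrt (D i)) = 0\<^sub>v n"
  hence "vec n (\<lambda>i. s i * sqrt (D i)) $ 0 = 0\<^sub>v n $ 0" by simp
  thus False using n s[OF n] Dpos[OF n] by simp
qed

lemma order0: assumes conn: "\<And>i j. i < n \<Longrightarrow> j < n \<Longrightarrow> R\<^sup>*\<^sup>* i j" and n: "0 < n"
  shows "Polynomial.order 0 (char_poly (lapm n R D)) = 1"
proof (rule order_one_sym[OF lapm_carrier lapm_sym _ _ ev_w0])
  show "vec n (\<lambda>i. sqrt (D i)) \<in> carrier_vec n" by simp
  show "vec n (\<lambda>i. sqrt (D i)) \<noteq> 0\<^sub>v n" using w_nonzero[OF n, of "\<lambda>_. 1"] by simp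
  show "\<And>v. v \<in> carrier_vec n \<Longrightarrow> lapm n R D *\<^sub>v v = 0 \<cdot>\<^sub>v v \<Longrightarrow> \<exists>c. v = c \<cdot>\<^sub>v vec n (\<lambda>i. sqrt (D i))"
    using ev_unique0[OF conn n] by blast
qed

context
  fixes S :: "nat set"
  assumes S: "\<And>i j. R i j \<Longrightarrow> (i \<in> S \<longleftrightarrow> j \<notin> S)"
begin

definition sg :: "nat \<Rightarrow> real" where "sg i = (if i \<in> S then 1 else -1)"

lemma sg_edge: "R i j \<Longrightarrow> sg j = - sg i" using S unfolding sg_def by auto

lemma sg_sq: "sg i * sg i = 1" unfolding sg_def by auto

lemma ev_w2: "lapm n R D *\<^sub>v vec n (\<lambda>i. sg i * sqrt (D i)) = 2 \<cdot>\<^sub>v vec n (\<lambda>i. sg i * sqrt (D i))"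
proof (subst eig_iff, simp, intro allI impI)
  fix i assume i: "i < n"
  have "\<And>j. j \<in> {j. j < n \<and> R i j} \<Longrightarrow> vec n (\<lambda>i. sg i * sqrt (D i)) $ j / sqrt (D j) = - sg i"
    using Dpos sg_edge by auto
  hence "(\<Sum>j\<in>{j. j < n \<and> R i j}. vec n (\<lambda>i. sg i * sqrt (D i)) $ j / sqrt (D j)) = card {j. j < n \<and> R i j} * (- sg i)"
    by simp
  also have "\<dots> = D i * (- sg i)" using Dcard[OF i] by simp
  finally show "(1 - 2) * real (D i) * (vec n (\<lambda>i. sg i * sqrt (real (D i))) $ i / sqrt (real (D i))) =
         (\<Sum>j\<in>{j. j < n \<and> R i j}. vec n (\<lambda>i. sg i * sqrt (real (D i))) $ j / sqrt (real (D j)))"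
    using i Dpos[OF i] by simp
qed

lemma ev_unique2:
  assumes conn: "\<And>i j. i < n \<Longrightarrow> j < n \<Longrightarrow> R\<^sup>*\<^sup>* i j" and n: "0 < n"
    and x: "x \<in> carrier_vec n" and e: "lapm n R D *\<^sub>v x = 2 \<cdot>\<^sub>v x"
  shows "\<exists>c. x = c \<cdot>\<^sub>v vec n (\<lambda>i. sg i * sqrt (D i))"
proof -
  define y where "y i = x $ i / sqrt (D i)" for i
  define g where "g i = sg i * y i" for i
  have edge: "g i = g j" if r: "R i j" for i j
  proof -
    have "y i = - y j" using ev_edge[OF x e _ r] unfolding y_def by simp
    thus ?thesis unfolding g_def using sg_edge[OF r] by simp
  qed
  have gc: "g i = g 0" if "i < n" for i
    using propagate[of g, OF edge conn[OF that n]] by auto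
  show ?thesis
  proof (intro exI[of _ "g 0"] eq_vecI)
    fix i assume "i < dim_vec (g 0 \<cdot>\<^sub>v vec n (\<lambda>i. sg i * sqrt (D i)))"
    hence i: "i < n" by simp
    have "x $ i = sqrt (D i) * y i" unfolding y_def using Dpos[OF i] by simp
    also have "y i = sg i * g i" unfolding g_def using sg_sq[of i] by (simp add: mult.assoc[symmetric])
    finally show "x $ i = (g 0 \<cdot>\<^sub>v vec n (\<lambda>i. sg i * sqrt (D i))) $ i" using gc[OF i] i by simp
  qed (use x in auto)
qed

lemma order2_bip: assumes conn: "\<And>i j. i < n \<Longrightarrow> j < n \<Longrightarrow> R\<^sup>*\<^sup>* i j" and n: "0 < n"
  shows "Polynomial.order 2 (char_poly (lapm n R D)) = 1"
proof (rule order_one_sym[OF lapm_carrier lapm_sym _ _ ev_w2])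
  show "vec n (\<lambda>i. sg i * sqrt (D i)) \<in> carrier_vec n" by simp
  show "vec n (\<lambda>i. sg i * sqrt (D i)) \<noteq> 0\<^sub>v n" using w_nonzero[OF n, of sg] by (simp add: sg_def)
  show "\<And>v. v \<in> carrier_vec n \<Longrightarrow> lapm n R D *\<^sub>v v = 2 \<cdot>\<^sub>v v \<Longrightarrow> \<exists>c. v = c \<cdot>\<^sub>v vec n (\<lambda>i. sg i * sqrt (D i))"
    using ev_unique2[OF conn n] by blast
qed

end

lemma order2_nonbip: assumes conn: "\<And>i j. i < n \<Longrightarrow> j < n \<Longrightarrow> R\<^sup>*\<^sup>* i j" 
  and nb: "\<not> (\<exists>S. \<forall>i j. R i j \<longrightarrow> (i \<in> S \<longleftrightarrow> j \<notin> S))"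
  shows "Polynomial.order 2 (char_poly (lapm n R D)) = 0"
proof -
  have "\<not> eigenvalue (lapm n R D) 2"
  proof
    assume "eigenvalue (lapm n R D) 2"
    then obtain x where x: "x \<in> carrier_vec n" "x \<noteq> 0\<^sub>v n" and e: "lapm n R D *\<^sub>v x = 2 \<cdot>\<^sub>v x"
      unfolding eigenvalue_def eigenvector_def lapm_dim by auto
    define y where "y i = x $ i / sqrt (D i)" for i
    have edge: "y i = - y j" if r: "R i j" for i j
      using ev_edge[OF x(1) e _ r] unfolding y_def by simp
    from x obtain i0 where i0: "i0 < n" "x $ i0 \<noteq> 0" by (metis carrier_vecD eq_vecI index_zero_vec(1,2))
    have yi0: "y i0 \<noteq> 0" using i0 Dpos[OF i0(1)] unfolding y_def by auto
    have ay: "\<bar>y i\<bar> = \<bar>y i0\<bar>" if "i < n" for i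
      using propagate[of "\<lambda>i. \<bar>y i\<bar>", OF _ conn[OF that i0(1)]] edge by force
    have "\<forall>i j. R i j \<longrightarrow> (i \<in> {i. y i > 0} \<longleftrightarrow> j \<notin> {i. y i > 0})"
    proof (intro allI impI)
      fix i j assume r: "R i j"
      have "y i \<noteq> 0" using ay[of i] Rn[OF r] yi0 by auto
      thus "(i \<in> {i. y i > 0} \<longleftrightarrow> j \<notin> {i. y i > 0})" using edge[OF r] by auto
    qed
    with nb show False by blast
  qed
  thus ?thesis using eigenvalue_root_char_poly[OF lapm_carrier] order_root by metis
qed

lemma eig_le2': "eigenvalue (lapm n R D) lam \<Longrightarrow> lam \<le> 2"
  unfolding eigenvalue_def eigenvector_def lapm_dim using eig_le2 by blast

end


lemma order_pow: fixes p :: "real poly" shows "p \<noteq> 0 \<Longrightarrow> Polynomial.order a (p ^ r) = r * Polynomial.order a p"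
  by (induct r) (simp_all add: order_mult order_0I)

lemma pcompose_pow: fixes p :: "real poly" shows "pcompose (p ^ r) q = (pcompose p q) ^ r"
  by (induct r) (simp_all add: pcompose_mult one_pCons)

lemma order_lin: fixes a c :: real shows "Polynomial.order a [:-c, 1:] = (if a = c then 1 else 0)"
proof (cases "a = c")
  case True thus ?thesis using order_power_n_n[of a 1] by simp
next
  case False thus ?thesis by (simp add: order_0I)
qed

lemma order_pcompose_Q:
  fixes p :: "real poly" and a :: real assumes p: "p \<noteq> 0"
  shows "Polynomial.order a (pcompose p [:0, 4, -2:]) = Polynomial.order (4*a - 2*a^2) p * (if a = 1 then 2 else 1)"
proof -
  define Q :: "real poly" where "Q = [:0, 4, -2:]"
  define b where "b = 4*a - 2*a^2"
  define r where "r = Polynomial.order b p"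
  obtain h where ph: "p = [:-b,1:]^r * h" and nd: "\<not> [:-b,1:] dvd h"
    using order_decomp[OF p, of b] unfolding r_def by blast
  have h0: "h \<noteq> 0" using ph p by auto
  have degQ: "Polynomial.degree Q > 0" unfolding Q_def by simp
  define F where "F = [:-a,1:] * [:-(2-a),1:]"
  have F0: "F \<noteq> 0" unfolding F_def by simp
  have pF: "pcompose [:-b,1:] Q = Polynomial.smult (-2) F"
    unfolding F_def Q_def b_def
    by (rule poly_eq_poly_eq_iff[THEN iffD1], rule ext, simp add: poly_pcompose algebra_simps power2_eq_square)
  have "pcompose p Q = (Polynomial.smult (-2) F) ^ r * pcompose h Q"
    unfolding ph pcompose_mult pcompose_pow pF ..
  also have "(Polynomial.smult (-2) F) ^ r = Polynomial.smult ((-2)^r) (F ^ r)" by (rule smult_power)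
  finally have pc: "pcompose p Q = Polynomial.smult ((-2)^r) (F ^ r * pcompose h Q)" by simp
  have hQ: "pcompose h Q \<noteq> 0" using pcompose_eq_0_iff[OF degQ] h0 by simp
  have "poly (pcompose h Q) a \<noteq> 0"
    unfolding poly_pcompose using nd poly_eq_0_iff_dvd[of h b]
    by (simp add: Q_def b_def algebra_simps power2_eq_square)
  hence o1: "Polynomial.order a (pcompose h Q) = 0" by (rule order_0I)
  have o2: "Polynomial.order a F = (if a = 1 then 2 else 1)"
  proof -
    have "Polynomial.order a F = Polynomial.order a [:-a,1:] + Polynomial.order a [:-(2-a),1:]"
      unfolding F_def by (rule order_mult, simp)
    also have "Polynomial.order a [:-a,1:] = 1" by (simp add: order_lin)
    also have "Polynomial.order a [:-(2-a),1:] = (if a = 1 then 1 else 0)"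
      using order_lin[of a "2-a"] by (auto split: if_splits)
    finally show ?thesis by simp
  qed
  have "Polynomial.order a (pcompose p Q) = Polynomial.order a (F ^ r * pcompose h Q)"
    unfolding pc by (rule order_smult, simp)
  also have "\<dots> = Polynomial.order a (F ^ r) + Polynomial.order a (pcompose h Q)"
    by (rule order_mult, insert F0 hQ, simp)
  also have "\<dots> = r * (if a = 1 then 2 else 1)" unfolding o1 order_pow[OF F0] o2 by simp
  finally show ?thesis unfolding Q_def r_def b_def .
qed

lemma if01_right: "(a::real) * (t * (if c then 1 else 0)) = (if c then a * t else 0)" by simp
lemma if01_left: "(t * (if c then 1 else 0)) * (a::real) = (if c then t * a else 0)" by simp

lemma det_block_identity:
  fixes Bm :: "real mat" and t :: real
  assumes Bm: "Bm \<in> carrier_mat n p"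
  shows "det (four_block_mat (t \<cdot>\<^sub>m 1\<^sub>m n) Bm (transpose_mat Bm) (t \<cdot>\<^sub>m 1\<^sub>m p)) * t^n
     = t^p * det ((t*t) \<cdot>\<^sub>m 1\<^sub>m n - Bm * transpose_mat Bm)"
proof -
  let ?M = "four_block_mat (t \<cdot>\<^sub>m 1\<^sub>m n) Bm (transpose_mat Bm) (t \<cdot>\<^sub>m 1\<^sub>m p)"
  let ?N = "four_block_mat (t \<cdot>\<^sub>m 1\<^sub>m n) (0\<^sub>m n p) ((-1) \<cdot>\<^sub>m transpose_mat Bm) (1\<^sub>m p)"
  have BT: "transpose_mat Bm \<in> carrier_mat p n" using Bm by simp
  have M: "?M \<in> carrier_mat (n+p) (n+p)" using Bm by auto
  have N: "?N \<in> carrier_mat (n+p) (n+p)" using Bm by auto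
  have "?M * ?N = four_block_mat ((t \<cdot>\<^sub>m 1\<^sub>m n) * (t \<cdot>\<^sub>m 1\<^sub>m n) + Bm * ((-1) \<cdot>\<^sub>m transpose_mat Bm))
     ((t \<cdot>\<^sub>m 1\<^sub>m n) * 0\<^sub>m n p + Bm * 1\<^sub>m p)
     (transpose_mat Bm * (t \<cdot>\<^sub>m 1\<^sub>m n) + (t \<cdot>\<^sub>m 1\<^sub>m p) * ((-1) \<cdot>\<^sub>m transpose_mat Bm))
     (transpose_mat Bm * 0\<^sub>m n p + (t \<cdot>\<^sub>m 1\<^sub>m p) * 1\<^sub>m p)"
    by (rule mult_four_block_mat, insert Bm, auto)
  also have "(t \<cdot>\<^sub>m 1\<^sub>m n) * (t \<cdot>\<^sub>m 1\<^sub>m n) + Bm * ((-1) \<cdot>\<^sub>m transpose_mat Bm) = (t*t) \<cdot>\<^sub>m 1\<^sub>m n - Bm * transpose_mat Bm"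
    by (rule eq_matI, insert Bm, auto simp: scalar_prod_def sum_negf if01_left if01_right)
  also have "(t \<cdot>\<^sub>m 1\<^sub>m n) * 0\<^sub>m n p + Bm * 1\<^sub>m p = Bm" using Bm by simp
  also have "transpose_mat Bm * (t \<cdot>\<^sub>m 1\<^sub>m n) + (t \<cdot>\<^sub>m 1\<^sub>m p) * ((-1) \<cdot>\<^sub>m transpose_mat Bm) = 0\<^sub>m p n"
    by (rule eq_matI, insert Bm, auto simp: scalar_prod_def sum_negf if01_left if01_right)
  also have "transpose_mat Bm * 0\<^sub>m n p + (t \<cdot>\<^sub>m 1\<^sub>m p) * 1\<^sub>m p = t \<cdot>\<^sub>m 1\<^sub>m p" using Bm by simp
  finally have MN: "?M * ?N = four_block_mat ((t*t) \<cdot>\<^sub>m 1\<^sub>m n - Bm * transpose_mat Bm) Bm (0\<^sub>m p n) (t \<cdot>\<^sub>m 1\<^sub>m p)" .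
  have "det ?M * det ?N = det (?M * ?N)" by (rule det_mult[OF M N, symmetric])
  also have "\<dots> = det ((t*t) \<cdot>\<^sub>m 1\<^sub>m n - Bm * transpose_mat Bm) * det (t \<cdot>\<^sub>m 1\<^sub>m p)"
    unfolding MN by (rule det_four_block_mat_lower_left_zero, insert Bm, auto)
  also have "det (t \<cdot>\<^sub>m 1\<^sub>m p) = t^p" by simp
  also have "det ?N = det (t \<cdot>\<^sub>m 1\<^sub>m n) * det (1\<^sub>m p)"
    by (rule det_four_block_mat_upper_right_zero, insert Bm, auto)
  also have "\<dots> = t^n" by simp
  finally show ?thesis by simp
qed



lemma det_reindex:
  fixes g :: "'a \<Rightarrow> 'a \<Rightarrow> 'b :: comm_ring_1"
  assumes d1: "distinct l1" and d2: "distinct l2" and s: "set l1 = set l2"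
  shows "det (mat (length l1) (length l1) (\<lambda>(i,j). g (l1!i) (l1!j))) = det (mat (length l2) (length l2) (\<lambda>(i,j). g (l2!i) (l2!j)))"
proof -
  define N where "N = length l1"
  have N2: "length l2 = N" unfolding N_def using distinct_card[OF d1] distinct_card[OF d2] s by simp
  have b1: "bij_betw ((!) l1) {..<N} (set l1)" by (rule bij_betw_nth[OF d1], auto simp: N_def)
  have b2: "bij_betw ((!) l2) {..<N} (set l2)" by (rule bij_betw_nth[OF d2], auto simp: N2)
  define h where "h i = (if i < N then the_inv_into {..<N} ((!) l2) (l1 ! i) else i)" for i
  have hl: "h i < N \<and> l2 ! (h i) = l1 ! i" if i: "i < N" for i
  proof -
    have mem: "l1 ! i \<in> set l2" using i s unfolding N_def by (metis nth_mem)
    have "the_inv_into {..<N} ((!) l2) (l1 ! i) \<in> {..<N}"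
      using bij_betw_the_inv_into[OF b2] mem by (auto simp: bij_betw_def)
    moreover have "l2 ! (the_inv_into {..<N} ((!) l2) (l1 ! i)) = l1 ! i"
      using f_the_inv_into_f_bij_betw[OF b2] mem by auto
    ultimately show ?thesis unfolding h_def using i by auto
  qed
  have bh: "bij_betw h {..<N} {..<N}"
  proof -
    have "bij_betw (the_inv_into {..<N} ((!) l2) \<circ> (!) l1) {..<N} {..<N}"
      by (rule bij_betw_trans[OF b1], unfold s, rule bij_betw_the_inv_into[OF b2])
    moreover have "\<And>i. i \<in> {..<N} \<Longrightarrow> (the_inv_into {..<N} ((!) l2) \<circ> (!) l1) i = h i"
      unfolding h_def by auto
    ultimately show ?thesis using bij_betw_cong by blast
  qed
  have perm: "h permutes {0..<N}"
    by (rule bij_imp_permutes, insert bh, auto simp: h_def lessThan_atLeast0)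
  define A2 where "A2 = mat N N (\<lambda>(i,j). g (l2!i) (l2!j))"
  have A2: "A2 \<in> carrier_mat N N" unfolding A2_def by simp
  define B where "B = mat N N (\<lambda>(i,j). A2 $$ (h i, j))"
  have B: "B \<in> carrier_mat N N" unfolding B_def by simp
  have detB: "det B = signof h * det A2" unfolding B_def by (rule det_permute_rows[OF A2 perm])
  have eq: "mat N N (\<lambda>(i,j). g (l1!i) (l1!j)) = transpose_mat (mat N N (\<lambda>(i,j). transpose_mat B $$ (h i, j)))"
    by (rule eq_matI, auto simp: B_def A2_def hl)
  have "det (mat N N (\<lambda>(i,j). g (l1!i) (l1!j))) = det (mat N N (\<lambda>(i,j). transpose_mat B $$ (h i, j)))"
    unfolding eq by (rule det_transpose[of _ N], simp)
  also have "\<dots> = signof h * det (transpose_mat B)"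
    by (rule det_permute_rows[OF _ perm], insert B, simp)
  also have "det (transpose_mat B) = det B" by (rule det_transpose[OF B])
  also have "det B = signof h * det A2" by (rule detB)
  also have "signof h * (signof h * det A2) = (signof h * signof h) * det A2" by (simp add: mult.assoc)
  also have "(signof h * signof h :: 'b) = 1" by (simp add: of_int_mult[symmetric])
  finally show ?thesis unfolding N_def[symmetric] N2 A2_def by simp
qed



lemma vertex_list: assumes "finite A" shows "distinct (vertex_list A) \<and> set (vertex_list A) = A"
proof -
  from finite_distinct_list[OF assms] obtain xs where "set xs = A" "distinct xs" by blast
  hence "distinct xs \<and> set xs = A" by simp
  thus ?thesis unfolding vertex_list_def by (rule someI)
qed

lemma poly_char_poly_mat: fixes A :: "'a :: field mat" assumes A: "A \<in> carrier_mat N N"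
  shows "poly (char_poly A) x = det (mat N N (\<lambda>(i,j). (if i = j then x else 0) - A $$ (i,j)))"
  unfolding char_poly_def by (rule poly_det_cong[of _ N], insert A, auto simp: char_poly_matrix_def)

context
  fixes V :: "'v set" and E :: "'v \<Rightarrow> 'v \<Rightarrow> bool" and k :: nat
  assumes sg: "simple_graph V E"
begin

lemma sgE: "E u v \<Longrightarrow> u \<in> V \<and> v \<in> V \<and> u \<noteq> v \<and> E v u"
  using sg unfolding simple_graph_def by blast

lemma finV: "finite V" using sg unfolding simple_graph_def by blast

lemma edges_sub: "graph_edges V E \<subseteq> Pow V" unfolding graph_edges_def by auto

lemma finite_edges: "finite (graph_edges V E)"
  using finite_subset[OF edges_sub] finV by blast

lemma edge_pair: assumes e: "e \<in> graph_edges V E" and u: "u \<in> e"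
  shows "\<exists>v. e = {u, v} \<and> E u v"
proof -
  from e obtain a b where ab: "e = {a,b}" "E a b" unfolding graph_edges_def by auto
  show ?thesis
  proof (cases "u = a")
    case True thus ?thesis using ab by auto
  next
    case False hence "u = b" using u ab by auto
    thus ?thesis using ab sgE[OF ab(2)] by (intro exI[of _ a]) auto
  qed
qed

lemma edge_card: "e \<in> graph_edges V E \<Longrightarrow> card e = 2 \<and> e \<subseteq> V"
  unfolding graph_edges_def using sgE by auto

lemma card_edges_at: assumes u: "u \<in> V"
  shows "card {e \<in> graph_edges V E. u \<in> e} = degree V E u"
proof -
  have "bij_betw (\<lambda>v. {u, v}) {v \<in> V. E u v} {e \<in> graph_edges V E. u \<in> e}"
  proof (rule bij_betwI')
    fix v w assume "v \<in> {v \<in> V. E u v}" "w \<in> {v \<in> V. E u v}"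
    hence "v \<noteq> u" "w \<noteq> u" using sgE by auto
    thus "({u, v} = {u, w}) = (v = w)" by (auto simp: doubleton_eq_iff)
  next
    fix v assume "v \<in> {v \<in> V. E u v}"
    thus "{u, v} \<in> {e \<in> graph_edges V E. u \<in> e}" using u unfolding graph_edges_def by auto
  next
    fix e assume "e \<in> {e \<in> graph_edges V E. u \<in> e}"
    then obtain v where "e = {u, v}" "E u v" using edge_pair by blast
    thus "\<exists>v\<in>{v \<in> V. E u v}. e = {u, v}" using sgE by auto
  qed
  thus ?thesis unfolding degree_def by (simp add: bij_betw_same_card)
qed

lemma card_edges_pair: assumes uu: "u \<noteq> u'"
  shows "card {e \<in> graph_edges V E. u \<in> e \<and> u' \<in> e} = (if E u u' then 1 else 0)"
proof -
  have "{e \<in> graph_edges V E. u \<in> e \<and> u' \<in> e} = (if E u u' then {{u,u'}} else {})"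
  proof (cases "E u u'")
    case True
    have "{e \<in> graph_edges V E. u \<in> e \<and> u' \<in> e} = {{u,u'}}"
    proof
      show "{{u,u'}} \<subseteq> {e \<in> graph_edges V E. u \<in> e \<and> u' \<in> e}"
        using True sgE[OF True] unfolding graph_edges_def by auto
      show "{e \<in> graph_edges V E. u \<in> e \<and> u' \<in> e} \<subseteq> {{u,u'}}"
      proof
        fix e assume e: "e \<in> {e \<in> graph_edges V E. u \<in> e \<and> u' \<in> e}"
        then obtain v where "e = {u, v}" using edge_pair by blast
        thus "e \<in> {{u,u'}}" using e uu by auto
      qed
    qed
    thus ?thesis using True by simp
  next
    case False
    have "{e \<in> graph_edges V E. u \<in> e \<and> u' \<in> e} = {}"
    proof (rule ccontr)
      assume "{e \<in> graph_edges V E. u \<in> e \<and> u' \<in> e} \<noteq> {}"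
      then obtain e where e: "e \<in> graph_edges V E" "u \<in> e" "u' \<in> e" by auto
      then obtain v where "e = {u, v}" "E u v" using edge_pair by blast
      thus False using e uu False by auto
    qed
    thus ?thesis using False by simp
  qed
  thus ?thesis by simp
qed

abbreviation "SV \<equiv> subdiv_vertices k V E"
abbreviation "SA \<equiv> subdiv_adj k V E"
abbreviation "ES \<equiv> graph_edges V E \<times> {1..k}"

lemma finite_SV: "finite SV" unfolding subdiv_vertices_def using finV finite_edges by auto

lemma SA_sym: "SA a b = SA b a"
  by (cases a; cases b) auto

lemma degS_Inl: assumes u: "u \<in> V" shows "degree SV SA (Inl u) = k * degree V E u"
proof -
  have "{s \<in> SV. SA (Inl u) s} = Inr ` ({e \<in> graph_edges V E. u \<in> e} \<times> {1..k})"
  proof (rule Set.set_eqI)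
    fix s show "s \<in> {s \<in> SV. SA (Inl u) s} \<longleftrightarrow> s \<in> Inr ` ({e \<in> graph_edges V E. u \<in> e} \<times> {1..k})"
      by (cases s, auto simp: subdiv_vertices_def u)
  qed
  hence "degree SV SA (Inl u) = card ({e \<in> graph_edges V E. u \<in> e} \<times> {1..k})"
    unfolding degree_def by (simp add: card_image)
  also have "\<dots> = degree V E u * k" using card_edges_at[OF u] by (simp add: card_cartesian_product)
  finally show ?thesis by simp
qed

lemma degS_Inr: assumes z: "(e, l) \<in> ES" shows "degree SV SA (Inr (e, l)) = 2"
proof -
  have "{s \<in> SV. SA (Inr (e, l)) s} = Inl ` e"
  proof (rule Set.set_eqI)
    fix s show "s \<in> {s \<in> SV. SA (Inr (e, l)) s} \<longleftrightarrow> s \<in> Inl ` e"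
      using z edge_card[of e] by (cases s, auto simp: subdiv_vertices_def)
  qed
  hence "degree SV SA (Inr (e, l)) = card e" unfolding degree_def by (simp add: card_image)
  thus ?thesis using edge_card[of e] z by auto
qed

lemma nlap_sym: "nlap_entry SV SA a b = nlap_entry SV SA b a"
  unfolding nlap_entry_def using SA_sym by (auto simp: mult.commute)

lemma nlap_Inl_Inl: "nlap_entry SV SA (Inl a) (Inl b) = (if a = b then 1 else 0)"
  unfolding nlap_entry_def by auto

lemma nlap_Inr_Inr: "nlap_entry SV SA (Inr a) (Inr b) = (if a = b then 1 else 0)"
  unfolding nlap_entry_def by (cases a, cases b, auto)

lemma nlap_Inl_Inr: assumes u: "u \<in> V" and z: "z \<in> ES"
  shows "- nlap_entry SV SA (Inl u) (Inr z) = (if u \<in> fst z then 1 / sqrt (real (k * degree V E u) * 2) else 0)"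
proof -
  obtain e l where zz: "z = (e, l)" by force
  show ?thesis using z u unfolding zz nlap_entry_def degS_Inl[OF u] degS_Inr[OF z[unfolded zz]] by auto
qed

end

lemma c_prod: assumes k: "k > 0" and a: "a > 0" and b: "b > 0"
  shows "1 / sqrt (real (k * a) * 2) * (1 / sqrt (real (k * b) * 2)) * real k = 1 / (2 * sqrt (real a * real b))"
proof -
  have "sqrt (real (k * a) * 2) * sqrt (real (k * b) * 2) = sqrt ((2 * real k)^2 * (real a * real b))"
    by (simp add: real_sqrt_mult[symmetric] power2_eq_square algebra_simps)
  also have "\<dots> = 2 * real k * sqrt (real a * real b)" by (simp add: real_sqrt_mult)
  finally have e: "sqrt (real (k * a) * 2) * sqrt (real (k * b) * 2) = 2 * real k * sqrt (real a * real b)" .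
  have "1 / sqrt (real (k * a) * 2) * (1 / sqrt (real (k * b) * 2)) * real k = real k / (sqrt (real (k * a) * 2) * sqrt (real (k * b) * 2))"
    by simp
  also have "\<dots> = 1 / (2 * sqrt (real a * real b))" unfolding e using k by simp
  finally show ?thesis .
qed



lemma sum_list_nth: "distinct l \<Longrightarrow> (\<Sum>j<length l. f (l ! j)) = (\<Sum>z\<in>set l. f z)"
  by (rule sum.reindex_bij_betw[OF bij_betw_nth], auto)

theorem theorem1p1:
  fixes V :: "'v set" and E :: "'v \<Rightarrow> 'v \<Rightarrow> bool" and k :: nat
  assumes "simple_graph V E" and "connected_graph V E" and "card V \<ge> 2" and "k \<ge> 1"
  defines "n \<equiv> card V" and "m \<equiv> card (graph_edges V E)"
    and "LG \<equiv> norm_laplacian V E"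
    and "LS \<equiv> norm_laplacian (subdiv_vertices k V E) (subdiv_adj k V E)"
  shows "(\<forall>x. eigenvalue LG x \<and> x \<notin> {0, 2} \<longrightarrow>
            eigenvalue LS (f1 x) \<and> eigenvalue LS (f2 x) \<and>
            eig_mult LS (f1 x) = eig_mult LG x \<and> eig_mult LS (f2 x) = eig_mult LG x)
       \<and> (eigenvalue LS 0 \<and> eig_mult LS 0 = 1 \<and> eigenvalue LS 2 \<and> eig_mult LS 2 = 1)
       \<and> int (eig_mult LS 1) =
           (if bipartite_graph V E then int k * int m - int n + 2 else int k * int m - int n)"
proof -
  note sg = assms(1)
  have finV: "finite V" using finV[OF sg] .
  define vs where "vs = vertex_list V"
  have vs: "distinct vs" "set vs = V" using vertex_list[OF finV] unfolding vs_def by auto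
  have lvs: "length vs = n" unfolding n_def using distinct_card[OF vs(1)] vs(2) by simp
  have npos: "0 < n" using assms(3) unfolding n_def by simp
  have vsV: "vs ! i \<in> V" if "i < n" for i using that vs(2) lvs by auto
  have vs_inj: "vs ! i = vs ! j \<longleftrightarrow> i = j" if "i < n" "j < n" for i j
    using nth_eq_iff_index_eq[OF vs(1)] that lvs by auto
  have vs_surj: "\<exists>i<n. vs ! i = u" if "u \<in> V" for u
    using that vs(2) lvs by (auto simp: in_set_conv_nth)
  have degpos: "degree V E u > 0" if u: "u \<in> V" for u
  proof -
    have "V - {u} \<noteq> {}"
    proof
      assume "V - {u} = {}"
      hence "V \<subseteq> {u}" by auto
      hence "card V \<le> 1" using card_mono[of "{u}" V] by auto
      thus False using assms(3) by simp
    qed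
    then obtain v where v: "v \<in> V" "v \<noteq> u" by auto
    have "E\<^sup>*\<^sup>* u v" using assms(2) u v unfolding connected_graph_def by auto
    then obtain w where "E u w" using v(2) by (metis converse_rtranclpE)
    hence "w \<in> {w \<in> V. E u w}" using sgE[OF sg] by auto
    moreover have "finite {w \<in> V. E u w}" using finV by auto
    ultimately show ?thesis unfolding degree_def by (auto simp: card_gt_0_iff)
  qed
  define R where "R i j = (i < n \<and> j < n \<and> E (vs ! i) (vs ! j))" for i j
  define Dg where "Dg i = degree V E (vs ! i)" for i
  have Rsym: "\<And>i j. R i j \<Longrightarrow> R j i" unfolding R_def using sgE[OF sg] by auto
  have Rirr: "\<And>i. \<not> R i i" unfolding R_def using sgE[OF sg] by auto
  have Rn: "\<And>i j. R i j \<Longrightarrow> i < n \<and> j < n" unfolding R_def by auto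
  have Dpos: "\<And>i. i < n \<Longrightarrow> Dg i > 0" unfolding Dg_def using degpos vsV by auto
  have Dcard: "\<And>i. i < n \<Longrightarrow> Dg i = card {j. j < n \<and> R i j}"
  proof -
    fix i assume i: "i < n"
    have "{v \<in> V. E (vs ! i) v} = (!) vs ` {j. j < n \<and> R i j}"
    proof (rule Set.set_eqI)
      fix v show "v \<in> {v \<in> V. E (vs ! i) v} \<longleftrightarrow> v \<in> (!) vs ` {j. j < n \<and> R i j}"
        using vs_surj vsV i unfolding R_def by auto
    qed
    moreover have "inj_on ((!) vs) {j. j < n \<and> R i j}"
      by (rule inj_on_nth[OF vs(1)], auto simp: lvs)
    ultimately show "Dg i = card {j. j < n \<and> R i j}"
      unfolding Dg_def degree_def by (simp add: card_image)
  qed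
  have LGl: "LG = lapm n R Dg"
    unfolding LG_def norm_laplacian_def Let_def vs_def[symmetric] lvs lapm_def
    by (rule eq_matI, auto simp: nlap_entry_def R_def Dg_def vs_inj vsV)
  have LG: "LG \<in> carrier_mat n n" unfolding LGl lapm_def by auto
  have connR: "R\<^sup>*\<^sup>* i j" if "i < n" "j < n" for i j
  proof -
    have "E\<^sup>*\<^sup>* (vs ! i) (vs ! j)" using assms(2) vsV that unfolding connected_graph_def by auto
    have gen: "\<And>i. i < n \<Longrightarrow> vs ! i = u \<Longrightarrow> \<exists>j<n. vs ! j = v \<and> R\<^sup>*\<^sup>* i j" if "E\<^sup>*\<^sup>* u v" for u v
      using that
    proof (induct rule: rtranclp_induct)
      case base thus ?case by auto
    next
      case (step y z)
      from step(3)[OF step(4,5)] obtain j where j: "j < n" "vs ! j = y" "R\<^sup>*\<^sup>* i j" by auto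
      from sgE[OF sg step(2)] obtain j' where j': "j' < n" "vs ! j' = z" using vs_surj by blast
      have "R j j'" unfolding R_def using j j' step(2) by auto
      thus ?case using j j' by (intro exI[of _ j'], auto)
    qed
    from gen[OF \<open>E\<^sup>*\<^sup>* (vs ! i) (vs ! j)\<close> that(1) refl] obtain j' where "j' < n" "vs ! j' = vs ! j" "R\<^sup>*\<^sup>* i j'" by auto
    thus ?thesis using vs_inj[OF _ that(2)] by auto
  qed
  have bipR: "bipartite_graph V E \<longleftrightarrow> (\<exists>S. \<forall>i j. R i j \<longrightarrow> (i \<in> S \<longleftrightarrow> j \<notin> S))"
  proof
    assume "bipartite_graph V E"
    then obtain A where A: "\<forall>u v. E u v \<longrightarrow> (u \<in> A \<longleftrightarrow> v \<notin> A)" unfolding bipartite_graph_def by auto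
    show "\<exists>S. \<forall>i j. R i j \<longrightarrow> (i \<in> S \<longleftrightarrow> j \<notin> S)"
      by (rule exI[of _ "{i. vs ! i \<in> A}"], insert A, auto simp: R_def)
  next
    assume "\<exists>S. \<forall>i j. R i j \<longrightarrow> (i \<in> S \<longleftrightarrow> j \<notin> S)"
    then obtain S where S: "\<forall>i j. R i j \<longrightarrow> (i \<in> S \<longleftrightarrow> j \<notin> S)" by auto
    have "(\<forall>u v. E u v \<longrightarrow> (u \<in> (!) vs ` (S \<inter> {..<n}) \<longleftrightarrow> v \<notin> (!) vs ` (S \<inter> {..<n})))"
    proof (intro allI impI)
      fix u v assume e: "E u v"
      from sgE[OF sg e] obtain i j where ij: "i < n" "vs ! i = u" "j < n" "vs ! j = v" using vs_surj by metis
      have r: "R i j" unfolding R_def using ij e by auto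
      have mem: "w \<in> (!) vs ` (S \<inter> {..<n}) \<longleftrightarrow> l \<in> S" if "l < n" "vs ! l = w" for w l
        using that vs_inj by auto
      show "(u \<in> (!) vs ` (S \<inter> {..<n}) \<longleftrightarrow> v \<notin> (!) vs ` (S \<inter> {..<n}))"
        using mem[OF ij(1,2)] mem[OF ij(3,4)] S r by auto
    qed
    moreover have "(!) vs ` (S \<inter> {..<n}) \<subseteq> V" using vsV by auto
    ultimately show "bipartite_graph V E" unfolding bipartite_graph_def by blast
  qed
  have ordG0: "Polynomial.order 0 (char_poly LG) = 1"
    unfolding LGl by (rule order0[where n=n and R=R and D=Dg, OF Rsym Rirr Rn Dcard Dpos connR npos])
  have ordG2: "Polynomial.order 2 (char_poly LG) = (if bipartite_graph V E then 1 else 0)"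
  proof (cases "bipartite_graph V E")
    case True
    then obtain S where S: "\<And>i j. R i j \<Longrightarrow> (i \<in> S \<longleftrightarrow> j \<notin> S)" using bipR by auto
    show ?thesis unfolding LGl using True
      order2_bip[where n=n and R=R and D=Dg and S=S, OF Rsym Rirr Rn Dcard Dpos S connR npos] by simp
  next
    case False
    show ?thesis unfolding LGl using False bipR
      order2_nonbip[where n=n and R=R and D=Dg, OF Rsym Rirr Rn Dcard Dpos connR] by simp
  qed
  have le2: "lam \<le> 2" if "eigenvalue LG lam" for lam
    using that eig_le2'[where n=n and R=R and D=Dg, OF Rsym Rirr Rn Dcard Dpos] unfolding LGl by blast

  define ES where "ES = graph_edges V E \<times> {1..k}"
  have finES: "finite ES" unfolding ES_def using finite_edges[OF sg] by auto
  define es where "es = vertex_list ES"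
  have es: "distinct es" "set es = ES" using vertex_list[OF finES] unfolding es_def by auto
  define p where "p = length es"
  have pmk: "p = m * k" unfolding p_def m_def using distinct_card[OF es(1)] es(2)
    by (simp add: ES_def card_cartesian_product)
  have esES: "es ! j \<in> ES" if "j < p" for j using that es unfolding p_def by auto
  define SV where "SV = subdiv_vertices k V E"
  define SA where "SA = subdiv_adj k V E"
  have finSV: "finite SV" unfolding SV_def by (rule finite_SV[OF sg])
  define ws where "ws = map Inl vs @ map Inr es"
  have ws: "distinct ws" "set ws = SV"
    unfolding ws_def SV_def subdiv_vertices_def using vs es
    by (auto simp: distinct_map ES_def)
  define vS where "vS = vertex_list SV"
  have vS: "distinct vS" "set vS = SV" using vertex_list[OF finSV] unfolding vS_def by auto
  define NN where "NN = length vS"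
  have lws: "length ws = NN" unfolding NN_def using distinct_card[OF vS(1)] distinct_card[OF ws(1)] vS(2) ws(2) by simp
  have NN: "NN = n + p" using lws unfolding ws_def p_def by (simp add: lvs)
  have LSl: "LS = mat NN NN (\<lambda>(i,j). nlap_entry SV SA (vS ! i) (vS ! j))"
    unfolding LS_def norm_laplacian_def Let_def SV_def[symmetric] SA_def[symmetric] vS_def[symmetric] NN_def ..
  have LS: "LS \<in> carrier_mat NN NN" unfolding LSl by auto
  define c where "c u = 1 / sqrt (real (k * degree V E u) * 2)" for u
  define Bm where "Bm = mat n p (\<lambda>(i,j). - nlap_entry SV SA (Inl (vs ! i)) (Inr (es ! j)))"
  have Bm: "Bm \<in> carrier_mat n p" unfolding Bm_def by auto
  have Bme: "Bm $$ (i, j) = (if vs ! i \<in> fst (es ! j) then c (vs ! i) else 0)" if "i < n" "j < p" for i j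
    unfolding Bm_def c_def SV_def SA_def using that nlap_Inl_Inr[OF sg vsV[OF that(1)], of "es ! j" k] esES[OF that(2)]
    by (simp add: ES_def)
  have kpos: "k > 0" using assms(4) by simp
  have BBt: "Bm * transpose_mat Bm = 1\<^sub>m n - (1/2) \<cdot>\<^sub>m LG"
  proof (rule eq_matI)
    fix i i' assume "i < dim_row (1\<^sub>m n - (1/2) \<cdot>\<^sub>m LG)" "i' < dim_col (1\<^sub>m n - (1/2) \<cdot>\<^sub>m LG)"
    hence i: "i < n" and i': "i' < n" using LG by auto
    define u where "u = vs ! i"
    define u' where "u' = vs ! i'"
    have u: "u \<in> V" and u': "u' \<in> V" unfolding u_def u'_def using vsV i i' by auto
    have "(Bm * transpose_mat Bm) $$ (i, i') = (\<Sum>j<p. Bm $$ (i, j) * Bm $$ (i', j))"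
      using Bm i i' by (simp add: scalar_prod_def atLeast0LessThan)
    also have "\<dots> = (\<Sum>j<length es. (\<lambda>z. (if u \<in> fst z then c u else 0) * (if u' \<in> fst z then c u' else 0)) (es ! j))"
      unfolding p_def[symmetric] by (rule sum.cong[OF refl], simp add: Bme i i' u_def u'_def p_def)
    also have "\<dots> = (\<Sum>z\<in>ES. (if u \<in> fst z then c u else 0) * (if u' \<in> fst z then c u' else 0))"
      using sum_list_nth[OF es(1)] es(2) by simp
    also have "\<dots> = (\<Sum>z\<in>ES. if u \<in> fst z \<and> u' \<in> fst z then c u * c u' else 0)"
      by (rule sum.cong, auto)
    also have "\<dots> = (\<Sum>z\<in>{z \<in> ES. u \<in> fst z \<and> u' \<in> fst z}. c u * c u')"
      by (rule sum.inter_filter[symmetric, OF finES])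
    also have "\<dots> = card {z \<in> ES. u \<in> fst z \<and> u' \<in> fst z} * (c u * c u')" by simp
    also have "{z \<in> ES. u \<in> fst z \<and> u' \<in> fst z} = {e \<in> graph_edges V E. u \<in> e \<and> u' \<in> e} \<times> {1..k}"
      unfolding ES_def by auto
    also have "card \<dots> = card {e \<in> graph_edges V E. u \<in> e \<and> u' \<in> e} * k"
      by (simp add: card_cartesian_product)
    finally have lhs: "(Bm * transpose_mat Bm) $$ (i, i') = real (card {e \<in> graph_edges V E. u \<in> e \<and> u' \<in> e}) * (c u * c u' * real k)"
      by simp
    have cc: "c u * c u' * real k = 1 / (2 * sqrt (real (degree V E u) * real (degree V E u')))"
      unfolding c_def by (rule c_prod[OF kpos degpos[OF u] degpos[OF u']])
    have rhs: "(1\<^sub>m n - (1/2) \<cdot>\<^sub>m LG) $$ (i, i') = (if i = i' then 1/2 else if E u u' then 1 / (2 * sqrt (real (degree V E u) * real (degree V E u'))) else 0)"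
      using i i' LG unfolding LGl lapm_def R_def Dg_def u_def u'_def by auto
    show "(Bm * transpose_mat Bm) $$ (i, i') = (1\<^sub>m n - (1/2) \<cdot>\<^sub>m LG) $$ (i, i')"
    proof (cases "i = i'")
      case True
      hence uu: "u' = u" unfolding u_def u'_def by simp
      have d: "real (degree V E u) > 0" using degpos[OF u] by simp
      have "(Bm * transpose_mat Bm) $$ (i, i') = real (degree V E u) / (2 * sqrt (real (degree V E u) * real (degree V E u)))"
      proof -
        have cc': "c u * c u * real k = 1 / (2 * sqrt (real (degree V E u) * real (degree V E u)))"
          using cc unfolding uu .
        show ?thesis unfolding lhs uu cc' using card_edges_at[OF sg u] by simp
      qed
      also have "\<dots> = 1/2" using d by (simp add: real_sqrt_mult_self)
      finally show ?thesis unfolding rhs using True by simp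
    next
      case False
      hence uu: "u \<noteq> u'" unfolding u_def u'_def using vs_inj i i' by auto
      show ?thesis unfolding lhs cc rhs card_edges_pair[OF sg uu] using False by simp
    qed
  qed (use Bm LG in auto)
  define Q :: "real poly" where "Q = [:0, 4, -2:]"
  have key: "poly (char_poly LS) x * (x - 1)^n = (x - 1)^p * ((-1/2)^n * poly (char_poly LG) (poly Q x))" for x
  proof -
    define t where "t = x - 1"
    define gx where "gx a b = (if a = b then x else 0) - nlap_entry SV SA a b" for a b
    have "poly (char_poly LS) x = det (mat NN NN (\<lambda>(i,j). (if i = j then x else 0) - LS $$ (i,j)))"
      by (rule poly_char_poly_mat[OF LS])
    also have "mat NN NN (\<lambda>(i,j). (if i = j then x else 0) - LS $$ (i,j)) = mat (length vS) (length vS) (\<lambda>(i,j). gx (vS ! i) (vS ! j))"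
      unfolding LSl NN_def[symmetric] gx_def
      by (rule eq_matI, auto simp: nth_eq_iff_index_eq[OF vS(1)] NN_def)
    also have "det \<dots> = det (mat (length ws) (length ws) (\<lambda>(i,j). gx (ws ! i) (ws ! j)))"
      by (rule det_reindex[OF vS(1) ws(1)], simp add: vS ws)
    also have "mat (length ws) (length ws) (\<lambda>(i,j). gx (ws ! i) (ws ! j)) = four_block_mat (t \<cdot>\<^sub>m 1\<^sub>m n) Bm (transpose_mat Bm) (t \<cdot>\<^sub>m 1\<^sub>m p)"
    proof (rule eq_matI)
      fix i j assume "i < dim_row (four_block_mat (t \<cdot>\<^sub>m 1\<^sub>m n) Bm (transpose_mat Bm) (t \<cdot>\<^sub>m 1\<^sub>m p))"
        "j < dim_col (four_block_mat (t \<cdot>\<^sub>m 1\<^sub>m n) Bm (transpose_mat Bm) (t \<cdot>\<^sub>m 1\<^sub>m p))"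
      hence i: "i < n + p" and j: "j < n + p" using Bm by auto
      have wsi: "ws ! i = (if i < n then Inl (vs ! i) else Inr (es ! (i - n)))" if "i < n + p" for i
        unfolding ws_def using that by (simp add: nth_append lvs p_def)
      have nl: "nlap_entry SV SA (Inl a) (Inl b) = (if a = b then 1 else 0)" for a b
        unfolding SV_def SA_def by (rule nlap_Inl_Inl[OF sg])
      have nr: "nlap_entry SV SA (Inr a) (Inr b) = (if a = b then 1 else 0)" for a b
        unfolding SV_def SA_def by (rule nlap_Inr_Inr[OF sg])
      have ns: "nlap_entry SV SA a b = nlap_entry SV SA b a" for a b
        unfolding SV_def SA_def by (rule nlap_sym[OF sg])
      have esi: "es ! a = es ! b \<longleftrightarrow> a = b" if "a < p" "b < p" for a b
        using nth_eq_iff_index_eq[OF es(1)] that unfolding p_def by auto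
      show "mat (length ws) (length ws) (\<lambda>(i,j). gx (ws ! i) (ws ! j)) $$ (i, j) =
        four_block_mat (t \<cdot>\<^sub>m 1\<^sub>m n) Bm (transpose_mat Bm) (t \<cdot>\<^sub>m 1\<^sub>m p) $$ (i, j)"
        using i j Bm unfolding lws NN
        by (auto simp: wsi gx_def nl nr vs_inj esi t_def Bm_def ns[of "Inr _" "Inl _"])
    qed (use Bm lws NN in auto)
    finally have e1: "poly (char_poly LS) x = det (four_block_mat (t \<cdot>\<^sub>m 1\<^sub>m n) Bm (transpose_mat Bm) (t \<cdot>\<^sub>m 1\<^sub>m p))" .
    have "(t*t) \<cdot>\<^sub>m 1\<^sub>m n - Bm * transpose_mat Bm = (-1/2) \<cdot>\<^sub>m mat n n (\<lambda>(i,j). (if i = j then poly Q x else 0) - LG $$ (i,j))"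
      unfolding BBt by (rule eq_matI, insert LG, auto simp: t_def Q_def algebra_simps power2_eq_square)
    hence "det ((t*t) \<cdot>\<^sub>m 1\<^sub>m n - Bm * transpose_mat Bm) = (-1/2)^n * poly (char_poly LG) (poly Q x)"
      using poly_char_poly_mat[OF LG, of "poly Q x"] by simp
    with det_block_identity[OF Bm, of t] e1 show ?thesis unfolding t_def by simp
  qed

  have chS0: "char_poly LS \<noteq> 0" using degree_monic_char_poly[OF LS] by auto
  have chG0: "char_poly LG \<noteq> 0" using degree_monic_char_poly[OF LG] by auto
  have l0: "poly [:-1,1:] x = x - 1" for x :: real by simp
  have l1: "poly ([:-1,1:]^r) x = (x - 1)^r" for r and x :: real by (simp only: poly_power l0)
  have pid: "char_poly LS * [:-1,1:]^n = [:-1,1:]^p * Polynomial.smult ((-1/2)^n) (pcompose (char_poly LG) Q)"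
  proof (rule poly_eq_poly_eq_iff[THEN iffD1], rule ext)
    fix x
    show "poly (char_poly LS * [:-1,1:]^n) x = poly ([:-1,1:]^p * Polynomial.smult ((-1/2)^n) (pcompose (char_poly LG) Q)) x"
      unfolding poly_mult poly_smult poly_pcompose l1 using key[of x] by simp
  qed
  have oL: "Polynomial.order a ([:-1,1:]^r) = r * (if a = 1 then 1 else 0)" for a :: real and r
    using order_pow[of "[:-1,1:]" a r] order_lin[of a 1] by simp
  have ordS: "Polynomial.order a (char_poly LS) + (if a = 1 then n else 0) = 
     (if a = 1 then p else 0) + Polynomial.order (4*a - 2*a^2) (char_poly LG) * (if a = 1 then 2 else 1)" for a
  proof -
    have P0: "pcompose (char_poly LG) Q \<noteq> 0" using pcompose_eq_0_iff[of Q "char_poly LG"] chG0 unfolding Q_def by simp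
    have "Polynomial.order a (char_poly LS * [:-1,1:]^n) = Polynomial.order a (char_poly LS) + Polynomial.order a ([:-1,1:]^n)"
      by (rule order_mult, insert chS0, simp)
    also have "Polynomial.order a ([:-1,1:]^n) = (if a = 1 then n else 0)" unfolding oL by simp
    finally have lhs: "Polynomial.order a (char_poly LS * [:-1,1:]^n) = Polynomial.order a (char_poly LS) + (if a = 1 then n else 0)" .
    have "Polynomial.order a ([:-1,1:]^p * Polynomial.smult ((-1/2)^n) (pcompose (char_poly LG) Q)) 
      = Polynomial.order a ([:-1,1:]^p) + Polynomial.order a (Polynomial.smult ((-1/2)^n) (pcompose (char_poly LG) Q))"
      by (rule order_mult, insert P0, simp)
    also have "Polynomial.order a ([:-1,1:]^p) = (if a = 1 then p else 0)" unfolding oL by simp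
    also have "Polynomial.order a (Polynomial.smult ((-1/2)^n) (pcompose (char_poly LG) Q)) = Polynomial.order a (pcompose (char_poly LG) Q)"
      by (rule order_smult, simp)
    also have "\<dots> = Polynomial.order (4*a - 2*a^2) (char_poly LG) * (if a = 1 then 2 else 1)"
      unfolding Q_def by (rule order_pcompose_Q[OF chG0])
    finally show ?thesis using lhs pid by simp
  qed
  have evS: "eigenvalue LS a" if "Polynomial.order a (char_poly LS) \<noteq> 0" for a
    using that eigenvalue_root_char_poly[OF LS] order_root by blast
  have part1: "\<forall>x. eigenvalue LG x \<and> x \<notin> {0, 2} \<longrightarrow>
            eigenvalue LS (f1 x) \<and> eigenvalue LS (f2 x) \<and>
            eig_mult LS (f1 x) = eig_mult LG x \<and> eig_mult LS (f2 x) = eig_mult LG x"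
  proof (intro allI impI)
    fix lam assume h: "eigenvalue LG lam \<and> lam \<notin> {0, 2}"
    have lt: "lam < 2" using le2 h by force
    define s where "s = sqrt (4 - 2*lam)"
    have s: "s > 0" "s * s = 4 - 2*lam" using lt unfolding s_def by auto
    have op: "Polynomial.order lam (char_poly LG) \<noteq> 0"
      using h eigenvalue_root_char_poly[OF LG] order_root chG0 by blast
    have q1: "4 * f1 lam - 2 * (f1 lam)^2 = lam" "f1 lam \<noteq> 1"
    proof -
      have "4 * f1 lam - 2 * (f1 lam)^2 = 2 - (s*s)/2"
        unfolding f1_def s_def[symmetric] by (simp add: power2_eq_square field_simps)
      thus "4 * f1 lam - 2 * (f1 lam)^2 = lam" using s by (simp add: field_simps)
      show "f1 lam \<noteq> 1" unfolding f1_def s_def[symmetric] using s by (simp add: field_simps)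
    qed
    have q2: "4 * f2 lam - 2 * (f2 lam)^2 = lam" "f2 lam \<noteq> 1"
    proof -
      have "4 * f2 lam - 2 * (f2 lam)^2 = 2 - (s*s)/2"
        unfolding f2_def s_def[symmetric] by (simp add: power2_eq_square field_simps)
      thus "4 * f2 lam - 2 * (f2 lam)^2 = lam" using s by (simp add: field_simps)
      show "f2 lam \<noteq> 1" unfolding f2_def s_def[symmetric] using s by (simp add: field_simps)
    qed
    have e1: "Polynomial.order (f1 lam) (char_poly LS) = Polynomial.order lam (char_poly LG)"
      using ordS[of "f1 lam"] q1 by simp
    have e2: "Polynomial.order (f2 lam) (char_poly LS) = Polynomial.order lam (char_poly LG)"
      using ordS[of "f2 lam"] q2 by simp
    show "eigenvalue LS (f1 lam) \<and> eigenvalue LS (f2 lam) \<and>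
            eig_mult LS (f1 lam) = eig_mult LG lam \<and> eig_mult LS (f2 lam) = eig_mult LG lam"
      unfolding eig_mult_def using e1 e2 op evS by auto
  qed
  have o0: "Polynomial.order 0 (char_poly LS) = 1" using ordS[of 0] ordG0 by simp
  have o2: "Polynomial.order 2 (char_poly LS) = 1" using ordS[of 2] ordG0 by simp
  have o1: "Polynomial.order 1 (char_poly LS) + n = p + Polynomial.order 2 (char_poly LG) * 2"
    using ordS[of 1] by simp
  have part3: "int (eig_mult LS 1) =
           (if bipartite_graph V E then int k * int m - int n + 2 else int k * int m - int n)"
  proof -
    have A: "int (Polynomial.order 1 (char_poly LS)) + int n = int p + int (Polynomial.order 2 (char_poly LG)) * 2"
      using arg_cong[OF o1, of int] by simp
    have B: "int p = int k * int m" unfolding pmk by simp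
    show ?thesis unfolding eig_mult_def using A B ordG2 by (cases "bipartite_graph V E") auto
  qed
  show ?thesis using part1 part3 o0 o2 evS unfolding eig_mult_def by auto
qed


end
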